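(* For $t>0$ and $n,k\in\mathbb{Z}$ let $v=|n-k|/t$, $\phi_v(\theta)=2-2\cos\theta+v\theta$, and $$[K(t)]_{n,k}=\int_{|\theta+\frac{\pi}{2}|\le\frac{\pi}{6}}\mathrm{e}^{-\mathrm{i}t\phi_v(\theta)}\,d\theta .$$ Then for every $\sigma>1/2$ there is $C>0$ such that for all $t\ge1$ $$\sum_{n,k\in\mathbb{Z}}\big|[K(t)]_{n,k}\big|^2\frac{1}{(1+|n|)^{2\sigma}(1+|k|)^{2\sigma}}\le Ct^{-1}.$$ *)

theory Defs
  imports "HOL-Analysis.Analysis"
begin

definition phi :: "real \<Rightarrow> real \<Rightarrow> real" where
  "phi v \<theta> = 2 - 2 * cos \<theta> + v * \<theta>"

definition Kmat :: "real \<Rightarrow> int \<Rightarrow> int \<Rightarrow> complex" where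
  "Kmat t n k = (let v = real_of_int \<bar>n - k\<bar> / t in
     integral {\<theta>. \<bar>\<theta> + pi/2\<bar> \<le> pi/6}
       (\<lambda>\<theta>. exp (- \<i> * complex_of_real (t * phi v \<theta>))))"

definition wterm :: "real \<Rightarrow> real \<Rightarrow> int \<times> int \<Rightarrow> real" where
  "wterm \<sigma> t nk = (case nk of (n, k) \<Rightarrow>
     (cmod (Kmat t n k))^2 / ((1 + real_of_int \<bar>n\<bar>) powr (2*\<sigma>) * (1 + real_of_int \<bar>k\<bar>) powr (2*\<sigma>)))"

end

theory Submission
  imports Defs
begin


lemma orth:
  fixes k :: int
  shows "((\<lambda>\<theta>::real. exp (\<i> * of_int k * of_real \<theta>)) has_integral (if k = 0 then 2*pi else 0)) {-pi..pi}"
proof (cases "k = 0")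
  case True
  then show ?thesis using has_integral_const_real[of "1::complex" "-pi" pi] by (simp add: scaleR_conv_of_real)
next
  case False
  define F where "F = (\<lambda>z::complex. exp (\<i> * of_int k * z) / (\<i> * of_int k))"
  have d: "\<And>x::real. x \<in> {-pi..pi} \<Longrightarrow> ((\<lambda>x. F (of_real x)) has_vector_derivative exp (\<i> * of_int k * of_real x)) (at x within {-pi..pi})"
  proof -
    fix x :: real
    have "(F has_field_derivative exp (\<i> * of_int k * of_real x)) (at (of_real x))"
      unfolding F_def using False
      by (auto intro!: derivative_eq_intros simp: field_simps)
    then show "((\<lambda>x. F (of_real x)) has_vector_derivative exp (\<i> * of_int k * of_real x)) (at x within {-pi..pi})"
      by (rule has_vector_derivative_real_field)
  qed
  have "((\<lambda>\<theta>::real. exp (\<i> * of_int k * of_real \<theta>)) has_integral (F (of_real pi) - F (of_real (-pi)))) {-pi..pi}"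
    by (rule fundamental_theorem_of_calculus) (use d in auto)
  moreover have "F (of_real pi) = F (of_real (-pi))"
  proof -
    have "exp (\<i> * of_int k * of_real pi) = exp (\<i> * of_int k * of_real (-pi) + \<i> * (of_int k * (of_real pi * 2)))"
      by (simp add: algebra_simps)
    also have "\<dots> = exp (\<i> * of_int k * of_real (-pi))" by (rule exp_plus_2pin)
    finally show ?thesis unfolding F_def by simp
  qed
  ultimately show ?thesis using False by simp
qed




lemma orth2:
  fixes j l :: nat
  shows "((\<lambda>\<theta>::real. exp (\<i> * of_nat j * of_real \<theta>) * cnj (exp (\<i> * of_nat l * of_real \<theta>))) has_integral (if j = l then 2*pi else 0)) {-pi..pi}"
proof -
  have e: "exp (\<i> * of_nat j * of_real \<theta>) * cnj (exp (\<i> * of_nat l * of_real \<theta>)) = exp (\<i> * of_int (int j - int l) * of_real \<theta>)" for \<theta>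
    by (simp add: exp_cnj exp_add[symmetric] algebra_simps)
  show ?thesis unfolding e using orth[of "int j - int l"] by simp
qed

lemma parseval_poly:
  fixes c :: "nat \<Rightarrow> complex"
  assumes "finite J"
  shows "((\<lambda>\<theta>::real. (cmod (\<Sum>j\<in>J. c j * exp (\<i> * of_nat j * of_real \<theta>)))^2) has_integral (2*pi*(\<Sum>j\<in>J. (cmod (c j))^2))) {-pi..pi}"
proof -
  define e where "e = (\<lambda>j (\<theta>::real). exp (\<i> * of_nat j * of_real \<theta>))"
  have prod: "(\<Sum>j\<in>J. c j * e j \<theta>) * cnj (\<Sum>j\<in>J. c j * e j \<theta>) = (\<Sum>j\<in>J. \<Sum>l\<in>J. (c j * cnj (c l)) * (e j \<theta> * cnj (e l \<theta>)))" for \<theta>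
    by (simp add: cnj_sum sum_product algebra_simps)
  have "((\<lambda>\<theta>. \<Sum>j\<in>J. \<Sum>l\<in>J. (c j * cnj (c l)) * (e j \<theta> * cnj (e l \<theta>))) has_integral
      (\<Sum>j\<in>J. \<Sum>l\<in>J. (c j * cnj (c l)) * (if j = l then 2*pi else 0))) {-pi..pi}"
    using assms unfolding e_def
    by (intro has_integral_sum has_integral_mult_right orth2) auto
  moreover have "(\<Sum>j\<in>J. \<Sum>l\<in>J. (c j * cnj (c l)) * (if j = l then 2*pi else 0)) = (\<Sum>j\<in>J. c j * cnj (c j) * (2 * of_real pi))"
    using assms by (simp add: if_distrib sum.delta cong: if_cong)
  moreover have "(\<Sum>j\<in>J. c j * cnj (c j) * (2 * of_real pi)) = of_real (2*pi*(\<Sum>j\<in>J. (cmod (c j))^2))"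
    by (simp add: complex_norm_square[symmetric] sum_distrib_left algebra_simps del: of_real_power)
  ultimately have "((\<lambda>\<theta>. (\<Sum>j\<in>J. c j * e j \<theta>) * cnj (\<Sum>j\<in>J. c j * e j \<theta>)) has_integral of_real (2*pi*(\<Sum>j\<in>J. (cmod (c j))^2))) {-pi..pi}"
    unfolding prod by simp
  note h = has_integral_Re[OF this]
  have re: "Re (z * cnj z) = (cmod z)^2" for z :: complex
    by (metis Re_complex_of_real complex_norm_square)
  show ?thesis using h unfolding re Re_complex_of_real e_def .
qed





lemma bessel:
  fixes g :: "real \<Rightarrow> complex" and a b :: real
  assumes J: "finite J" and gc: "continuous_on {a..b} g" and g1: "\<And>\<theta>. cmod (g \<theta>) = 1"
    and ab: "-pi \<le> a" "a \<le> b" "b \<le> pi"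
  shows "(\<Sum>j\<in>J. (cmod (integral {a..b} (\<lambda>\<theta>. g \<theta> * cnj (exp (\<i> * of_nat j * of_real \<theta>)))))^2) \<le> 2*pi*(b-a)"
proof -
  define e where "e = (\<lambda>j (\<theta>::real). exp (\<i> * of_nat j * of_real \<theta>))"
  define c where "c = (\<lambda>j. integral {a..b} (\<lambda>\<theta>. g \<theta> * cnj (e j \<theta>)))"
  define X where "X = (\<Sum>j\<in>J. (cmod (c j))^2)"
  define P where "P = (\<lambda>\<theta>. \<Sum>j\<in>J. c j * e j \<theta>)"
  have econt: "continuous_on S (e j)" for j S unfolding e_def by (intro continuous_intros)
  have Pcont: "continuous_on S P" for S unfolding P_def by (intro continuous_intros econt)
  have hc: "((\<lambda>\<theta>. g \<theta> * cnj (e j \<theta>)) has_integral c j) {a..b}" for j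
    unfolding c_def by (intro integrable_integral integrable_continuous_interval continuous_intros gc econt)
  have cnjP: "g \<theta> * cnj (P \<theta>) = (\<Sum>j\<in>J. cnj (c j) * (g \<theta> * cnj (e j \<theta>)))" for \<theta>
    unfolding P_def by (simp add: cnj_sum sum_distrib_left algebra_simps)
  have "((\<lambda>\<theta>. g \<theta> * cnj (P \<theta>)) has_integral (\<Sum>j\<in>J. cnj (c j) * c j)) {a..b}"
    unfolding cnjP using J by (intro has_integral_sum has_integral_mult_right hc)
  moreover have "(\<Sum>j\<in>J. cnj (c j) * c j) = of_real X"
  proof -
    have "cnj (c j) * c j = of_real ((cmod (c j))^2)" for j by (metis complex_norm_square mult.commute)
    then show ?thesis unfolding X_def of_real_sum by simp
  qed
  ultimately have "((\<lambda>\<theta>. g \<theta> * cnj (P \<theta>)) has_integral of_real X) {a..b}" by simp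
  from has_integral_Re[OF this] have hA: "((\<lambda>\<theta>. Re (g \<theta> * cnj (P \<theta>))) has_integral X) {a..b}"
    unfolding Re_complex_of_real .
  have P2int: "(\<lambda>\<theta>. (cmod (P \<theta>))^2) integrable_on {u..v}" for u v
    by (intro integrable_continuous_interval continuous_intros Pcont)
  have "integral {a..b} (\<lambda>\<theta>. (cmod (P \<theta>))^2) \<le> integral {-pi..pi} (\<lambda>\<theta>. (cmod (P \<theta>))^2)"
    using ab by (intro integral_subset_le P2int) auto
  also have "\<dots> = 2*pi*X"
    using parseval_poly[OF J, of c] unfolding P_def e_def X_def by (simp add: integral_unique)
  finally have hB: "integral {a..b} (\<lambda>\<theta>. (cmod (P \<theta>))^2) \<le> 2*pi*X" .
  define L where "L = 1/(2*pi)"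
  have pw: "(cmod (g \<theta> - of_real L * P \<theta>))^2 = 1 - 2*L*Re (g \<theta> * cnj (P \<theta>)) + L^2 * (cmod (P \<theta>))^2" for \<theta>
  proof -
    have h1: "(Re (g \<theta>))^2 + (Im (g \<theta>))^2 = 1" using g1[of \<theta>] by (simp add: cmod_power2[symmetric])
    have h2: "(cmod (g \<theta> - of_real L * P \<theta>))^2 = (Re (g \<theta>) - L*Re(P \<theta>))^2 + (Im (g \<theta>) - L * Im (P \<theta>))^2"
      by (simp add: cmod_power2)
    have h3: "(cmod (P \<theta>))^2 = (Re(P \<theta>))^2 + (Im(P \<theta>))^2" by (simp add: cmod_power2)
    have h4: "Re (g \<theta> * cnj (P \<theta>)) = Re (g \<theta>)*Re(P \<theta>) + Im(g \<theta>)*Im(P \<theta>)" by simp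
    have h5: "(gr - L*pr)^2 + (gi - L*pi')^2 = (gr^2+gi^2) - 2*L*(gr*pr+gi*pi') + L^2*(pr^2+pi'^2)" for gr gi pr pi' :: real
      by algebra
    show ?thesis unfolding h2 h3 h4 h5 h1 ..
  qed
  have "((\<lambda>\<theta>. 1 - 2*L*Re (g \<theta> * cnj (P \<theta>)) + L^2 * (cmod (P \<theta>))^2) has_integral
      ((b-a) - 2*L*X + L^2 * integral {a..b} (\<lambda>\<theta>. (cmod (P \<theta>))^2))) {a..b}"
    using ab by (intro has_integral_add has_integral_diff has_integral_mult_right hA integrable_integral P2int)
      (use has_integral_const_real[of "1::real" a b] in auto)
  then have "0 \<le> (b-a) - 2*L*X + L^2 * integral {a..b} (\<lambda>\<theta>. (cmod (P \<theta>))^2)"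
    by (rule has_integral_nonneg) (metis pw zero_le_power2)
  also have "\<dots> \<le> (b-a) - 2*L*X + L^2 * (2*pi*X)"
    using hB by (intro add_left_mono mult_left_mono) auto
  also have "\<dots> = (b-a) - X/(2*pi)"
    unfolding L_def by (simp add: field_simps power2_eq_square)
  finally have "X \<le> 2*pi*(b-a)" by (simp add: field_simps)
  then show ?thesis unfolding X_def c_def e_def .
qed





lemma sin_bound:
  fixes \<theta> :: real
  assumes "-2*pi/3 \<le> \<theta>" "\<theta> \<le> -pi/3"
  shows "sin \<theta> \<le> -3/4"
proof -
  have "sin \<theta> = - cos (\<theta> + pi/2)" by (simp add: cos_add)
  also have "cos (\<theta> + pi/2) = cos \<bar>\<theta> + pi/2\<bar>" by simp
  also have ab: "\<bar>\<theta> + pi/2\<bar> \<le> pi/6" unfolding abs_le_iff using assms by linarith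
  have "cos (pi/6) \<le> cos \<bar>\<theta> + pi/2\<bar>"
    using ab by (intro cos_monotone_0_pi_le) auto
  then have "- cos \<bar>\<theta> + pi/2\<bar> \<le> - (sqrt 3/2)" by (simp add: cos_30)
  moreover have "3/2 \<le> sqrt 3" by (rule real_le_rsqrt) (simp add: power2_eq_square)
  ultimately show ?thesis by linarith
qed

lemma deriv_bound:
  fixes t v :: real
  assumes t: "t \<ge> 1" and v: "0 \<le> v" "v \<le> 1/2"
  shows "cmod (integral {-2*pi/3..-pi/3} (\<lambda>\<theta>. exp (- \<i> * complex_of_real (t * phi v \<theta>)))) \<le> 5/t"
proof -
  define a b where "a = -2*pi/3" and "b = -pi/3"
  have ab: "a \<le> b" unfolding a_def b_def by simp
  define D where "D = (\<lambda>z::complex. 2 * sin z + of_real v)"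
  define Ph where "Ph = (\<lambda>z::complex. - \<i> * of_real t * (2 - 2 * cos z + of_real v * z))"
  define F where "F = (\<lambda>z. exp (Ph z) * (\<i> / (of_real t * D z)))"
  define R where "R = (\<lambda>z. - 2 * \<i> * cos z / (of_real t * (D z)^2))"
  have Dle: "2 * sin x + v \<le> -1" if "x \<in> {a..b}" for x
    using sin_bound[of x] that v unfolding a_def b_def by auto
  have Dreal: "D (of_real x) = of_real (2 * sin x + v)" for x
    unfolding D_def by (simp add: sin_of_real)
  have Dnz: "D (of_real x) \<noteq> 0" if "x \<in> {a..b}" for x
    using Dle[OF that] unfolding Dreal by (metis of_real_eq_0_iff neg_0_le_iff_le not_one_le_zero add_neg_neg leD neg_le_0_iff_le  zero_le_one order.trans)
  have t0: "t > 0" using t by simp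
  define Q where "Q = (\<lambda>z. \<i> / (of_real t * D z))"
  have FQ: "F = (\<lambda>z. exp (Ph z) * Q z)" unfolding F_def Q_def ..
  have der: "(F has_field_derivative (exp (Ph z) + exp (Ph z) * R z)) (at z)" if Dz: "D z \<noteq> 0" for z
  proof -
    have dPh: "(Ph has_field_derivative (- \<i> * of_real t * D z)) (at z)"
      unfolding Ph_def D_def by (auto intro!: derivative_eq_intros simp: algebra_simps)
    have dE: "((\<lambda>z. exp (Ph z)) has_field_derivative exp (Ph z) * (- \<i> * of_real t * D z)) (at z)"
      using DERIV_chain2[OF DERIV_exp dPh] by (simp add: mult.commute)
    have dD: "(D has_field_derivative 2 * cos z) (at z)"
      unfolding D_def by (auto intro!: derivative_eq_intros)
    have dQ: "(Q has_field_derivative R z) (at z)"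
    proof -
      have "(Q has_field_derivative (- (\<i> * (of_real t * (2 * cos z)) / (of_real t * D z)^2))) (at z)"
        unfolding Q_def using Dz t0
        by (auto intro!: derivative_eq_intros dD simp: power2_eq_square)
      moreover have "- (\<i> * (of_real t * (2 * cos z)) / (of_real t * D z)^2) = R z"
        unfolding R_def using Dz t0 by (simp add: field_simps power2_eq_square)
      ultimately show ?thesis by simp
    qed
    have "(F has_field_derivative (exp (Ph z) * R z + exp (Ph z) * (- \<i> * of_real t * D z) * Q z)) (at z)"
      unfolding FQ by (rule DERIV_mult'[OF dE dQ])
    moreover have "(- \<i> * of_real t * D z) * Q z = 1"
      unfolding Q_def using Dz t0 by (simp add: field_simps)
    then have "exp (Ph z) * R z + exp (Ph z) * (- \<i> * of_real t * D z) * Q z = exp (Ph z) + exp (Ph z) * R z"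
      by (metis mult.assoc mult.right_neutral add.commute)
    ultimately show ?thesis by metis
  qed
  have ftc: "((\<lambda>x. exp (Ph (of_real x)) + exp (Ph (of_real x)) * R (of_real x)) has_integral (F (of_real b) - F (of_real a))) {a..b}"
    by (rule fundamental_theorem_of_calculus[OF ab]) (intro has_vector_derivative_real_field der Dnz; assumption)
  have Dc: "continuous_on S (\<lambda>x. D (of_real x))" for S unfolding D_def by (intro continuous_intros)
  have Rint: "(\<lambda>x. exp (Ph (of_real x)) * R (of_real x)) integrable_on {a..b}"
    unfolding R_def Ph_def
    by (intro integrable_continuous_interval continuous_intros Dc) (use Dnz t0 in auto)
  have eq: "exp (- \<i> * complex_of_real (t * phi v x)) = exp (Ph (of_real x))" for x
    unfolding Ph_def phi_def by (simp add: cos_of_real algebra_simps)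
  have ieq: "integral {a..b} (\<lambda>x. exp (Ph (of_real x))) = (F (of_real b) - F (of_real a)) - integral {a..b} (\<lambda>x. exp (Ph (of_real x)) * R (of_real x))"
    using has_integral_diff[OF ftc integrable_integral[OF Rint]] by (simp add: integral_unique)
  have normPh: "cmod (exp (Ph (of_real x))) = 1" for x
    unfolding Ph_def by (simp add: cos_of_real algebra_simps)
  have nF: "cmod (F (of_real x)) \<le> 1/t" if "x \<in> {a..b}" for x
  proof -
    have "cmod (F (of_real x)) = cmod (\<i> / complex_of_real (t * (2 * sin x + v)))"
      unfolding F_def norm_mult normPh Dreal of_real_mult by simp
    also have "\<dots> = 1 / (t * \<bar>2 * sin x + v\<bar>)"
      unfolding norm_divide norm_of_real using t0 by (simp add: abs_mult)
    also have "\<dots> \<le> 1 / (t * 1)"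
      using Dle[OF that] t0 by (intro divide_left_mono mult_left_mono) auto
    finally show ?thesis by simp
  qed
  have nR: "cmod (exp (Ph (of_real x)) * R (of_real x)) \<le> 2/t" if "x \<in> {a..b}" for x
  proof -
    have "cmod (exp (Ph (of_real x)) * R (of_real x)) = cmod (- 2 * \<i> * complex_of_real (cos x) / complex_of_real (t * (2 * sin x + v)^2))"
      unfolding R_def norm_mult normPh Dreal cos_of_real of_real_mult of_real_power by simp
    also have "\<dots> = 2 * \<bar>cos x\<bar> / (t * (2 * sin x + v)^2)"
      unfolding norm_divide norm_of_real norm_mult using t0 by (simp add: abs_mult)
    also have "\<dots> \<le> 2 * 1 / (t * 1)"
    proof -
      have c1: "2 * \<bar>cos x\<bar> \<le> 2 * 1" by simp
      have "1 \<le> \<bar>2 * sin x + v\<bar>" using Dle[OF that] by simp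
      then have s1: "1 \<le> (2 * sin x + v)^2" by (metis abs_ge_self one_le_power power2_abs order_trans)
      then have "t * 1 \<le> t * (2 * sin x + v)^2" using t0 by simp
      then show ?thesis using frac_le[of "2*1" "2 * \<bar>cos x\<bar>" "t*1" "t * (2 * sin x + v)^2"] c1 t0 by simp
    qed
    finally show ?thesis by simp
  qed
  have bI: "cmod (integral {a..b} (\<lambda>x. exp (Ph (of_real x)) * R (of_real x))) \<le> 2/t * (b - a)"
    using has_integral_bound[of "2/t" _ _ a b] integrable_integral[OF Rint] nR t0 ab by auto
  have "cmod (integral {a..b} (\<lambda>x. exp (Ph (of_real x)))) \<le> cmod (F (of_real b)) + cmod (F (of_real a)) + 2/t * (b - a)"
    unfolding ieq using bI norm_triangle_ineq4[of "F (of_real b) - F (of_real a)" "integral {a..b} (\<lambda>x. exp (Ph (of_real x)) * R (of_real x))"]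
      norm_triangle_ineq4[of "F (of_real b)" "F (of_real a)"] by linarith
  also have "\<dots> \<le> 1/t + 1/t + 2/t * (pi/3)"
    using nF[of a] nF[of b] ab unfolding a_def b_def by auto
  also have "\<dots> \<le> 5/t"
    using pi_less_4 t0 by (simp add: field_simps)
  finally show ?thesis unfolding eq[symmetric] a_def b_def .
qed



lemma set_eq: "{\<theta>::real. \<bar>\<theta> + pi/2\<bar> \<le> pi/6} = {-2*pi/3..-pi/3}"
proof (rule set_eqI)
  fix x :: real
  show "x \<in> {\<theta>. \<bar>\<theta> + pi/2\<bar> \<le> pi/6} \<longleftrightarrow> x \<in> {-2*pi/3..-pi/3}"
    unfolding mem_Collect_eq atLeastAtMost_iff abs_le_iff by (intro iffI; elim conjE; intro conjI; linarith)
qed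

definition cc :: "real \<Rightarrow> nat \<Rightarrow> complex" where
  "cc t j = integral {-2*pi/3..-pi/3} (\<lambda>\<theta>. exp (- \<i> * of_real (t * (2 - 2 * cos \<theta>))) * cnj (exp (\<i> * of_nat j * of_real \<theta>)))"

lemma Kmat_eq:
  assumes "t > 0"
  shows "Kmat t n k = cc t (nat \<bar>n - k\<bar>)"
proof -
  have "exp (- \<i> * complex_of_real (t * phi (real_of_int \<bar>n - k\<bar> / t) \<theta>)) =
        exp (- \<i> * of_real (t * (2 - 2 * cos \<theta>))) * cnj (exp (\<i> * of_nat (nat \<bar>n - k\<bar>) * of_real \<theta>))" for \<theta>
  proof -
    have e1: "t * phi (real_of_int \<bar>n - k\<bar> / t) \<theta> = t * (2 - 2 * cos \<theta>) + real (nat \<bar>n - k\<bar>) * \<theta>"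
      using assms unfolding phi_def by (simp add: field_simps)
    have "- \<i> * complex_of_real (t * phi (real_of_int \<bar>n - k\<bar> / t) \<theta>) =
       - \<i> * of_real (t * (2 - 2 * cos \<theta>)) + cnj (\<i> * of_nat (nat \<bar>n - k\<bar>) * of_real \<theta>)"
      unfolding e1 of_real_add of_real_mult of_real_of_nat_eq by (simp add: algebra_simps)
    then show ?thesis by (simp only: exp_add exp_cnj)
  qed
  then show ?thesis unfolding Kmat_def cc_def Let_def set_eq by simp
qed

lemma cc_bessel:
  assumes "finite J"
  shows "(\<Sum>j\<in>J. (cmod (cc t j))^2) \<le> 11"
proof -
  have "(\<Sum>j\<in>J. (cmod (cc t j))^2) \<le> 2*pi*(-pi/3 - (-2*pi/3))"
    unfolding cc_def
  proof (rule bessel[OF assms])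
    show "continuous_on {- 2 * pi / 3..- pi / 3} (\<lambda>\<theta>. exp (- \<i> * of_real (t * (2 - 2 * cos \<theta>))))"
      by (intro continuous_intros)
    show "cmod (exp (- \<i> * of_real (t * (2 - 2 * cos \<theta>)))) = 1" for \<theta>
      by simp
      show "- pi \<le> - 2 * pi / 3" using pi_gt_zero by linarith
    show "- 2 * pi / 3 \<le> - pi / 3" using pi_gt_zero by linarith
    show "- pi / 3 \<le> pi" using pi_gt_zero by linarith
  qed
  also have "\<dots> = 2 * (pi * pi) / 3" by (simp add: field_simps)
  also have "\<dots> \<le> 2 * (4 * 4) / 3"
    using mult_mono[of pi 4 pi 4] pi_less_4 pi_gt_zero by simp
  also have "\<dots> \<le> 11" by simp
  finally show ?thesis .
qed




lemma two_to_one: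
  fixes h :: "nat \<Rightarrow> real"
  assumes bd: "\<And>J. finite J \<Longrightarrow> sum h J \<le> M" and A: "finite A"
  shows "(\<Sum>n\<in>A. h (nat \<bar>n - k\<bar>)) \<le> 2*M"
proof -
  let ?f = "\<lambda>n::int. nat \<bar>n - k\<bar>"
  have s: "(\<Sum>n\<in>A. h (?f n)) = (\<Sum>n\<in>A\<inter>{k..}. h (?f n)) + (\<Sum>n\<in>A-{k..}. h (?f n))"
    by (rule sum.Int_Diff[OF A])
  have inj1: "inj_on ?f (A\<inter>{k..})" by (auto simp: inj_on_def)
  have inj2: "inj_on ?f (A-{k..})" by (auto simp: inj_on_def)
  have "(\<Sum>n\<in>A\<inter>{k..}. h (?f n)) = sum h (?f ` (A\<inter>{k..}))" using sum.reindex[OF inj1, of h] unfolding o_def ..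
  also have "\<dots> \<le> M" using A by (intro bd) auto
  finally have 1: "(\<Sum>n\<in>A\<inter>{k..}. h (?f n)) \<le> M" .
  have "(\<Sum>n\<in>A-{k..}. h (?f n)) = sum h (?f ` (A-{k..}))" using sum.reindex[OF inj2, of h] unfolding o_def ..
  also have "\<dots> \<le> M" using A by (intro bd) auto
  finally have 2: "(\<Sum>n\<in>A-{k..}. h (?f n)) \<le> M" .
  show ?thesis using s 1 2 by linarith
qed

definition ww :: "real \<Rightarrow> int \<Rightarrow> real" where
  "ww \<sigma> n = 1 / ((1 + real_of_int \<bar>n\<bar>) powr (2*\<sigma>))"

definition AA :: "real \<Rightarrow> int \<Rightarrow> real" where
  "AA t m = (cmod (cc t (nat \<bar>m\<bar>)))^2"

lemma ww_sum_bound: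
  assumes "\<sigma> > 1/2"
  shows "\<exists>S. \<forall>A. finite A \<longrightarrow> (\<Sum>n\<in>A. ww \<sigma> n) \<le> S"
proof -
  define hw where "hw = (\<lambda>j::nat. 1 / ((1 + real j) powr (2*\<sigma>)))"
  have hw_eq: "hw j = real (Suc j) powr (- (2*\<sigma>))" for j
    unfolding hw_def by (simp add: powr_minus_divide add.commute)
  have "summable (\<lambda>j::nat. real j powr (- (2*\<sigma>)))"
    using assms by (subst summable_real_powr_iff) simp
  then have sh: "summable hw"
    unfolding hw_eq by (subst summable_Suc_iff)
  have hb: "sum hw J \<le> suminf hw" if "finite J" for J
    using sh that by (rule sum_le_suminf) (simp add: hw_def)
  have "(\<Sum>n\<in>A. ww \<sigma> n) \<le> 2 * suminf hw" if "finite A" for A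
  proof -
    have "(\<Sum>n\<in>A. ww \<sigma> n) = (\<Sum>n\<in>A. hw (nat \<bar>n - 0\<bar>))"
      unfolding ww_def hw_def by simp
    also have "\<dots> \<le> 2 * suminf hw" by (rule two_to_one[OF hb that])
    finally show ?thesis .
  qed
  then show ?thesis by blast
qed

lemma ww_props:
  assumes "\<sigma> > 1/2"
  shows "0 < ww \<sigma> n" "ww \<sigma> n \<le> 1" "ww \<sigma> n \<le> 1 / (1 + real_of_int \<bar>n\<bar>)"
proof -
  have b1: "1 \<le> 1 + real_of_int \<bar>n\<bar>" by simp
  have "(1 + real_of_int \<bar>n\<bar>) powr 1 \<le> (1 + real_of_int \<bar>n\<bar>) powr (2*\<sigma>)"
    using assms by (intro powr_mono) auto
  then have ge: "1 + real_of_int \<bar>n\<bar> \<le> (1 + real_of_int \<bar>n\<bar>) powr (2*\<sigma>)" by simp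
  show "0 < ww \<sigma> n" unfolding ww_def by simp
  show "ww \<sigma> n \<le> 1 / (1 + real_of_int \<bar>n\<bar>)" unfolding ww_def
    using ge b1 by (intro divide_left_mono) auto
  moreover have "1 / (1 + real_of_int \<bar>n\<bar>) \<le> 1" using b1 by simp
  ultimately show "ww \<sigma> n \<le> 1" by linarith
qed

lemma wterm_eq:
  assumes "t > 0"
  shows "wterm \<sigma> t (n, k) = AA t (n - k) * (ww \<sigma> n * ww \<sigma> k)"
  unfolding wterm_def AA_def ww_def Kmat_eq[OF assms] by simp

lemma AA_small:
  assumes t: "t \<ge> 1" and nk: "real_of_int \<bar>n - k\<bar> \<le> t/2"
  shows "AA t (n - k) \<le> 25/t"
proof -
  have t0: "t > 0" using t by simp
  define v where "v = real_of_int \<bar>n - k\<bar> / t"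
  have v: "0 \<le> v" "v \<le> 1/2" unfolding v_def using t0 nk by (auto simp: field_simps)
  have "Kmat t n k = integral {-2*pi/3..-pi/3} (\<lambda>\<theta>. exp (- \<i> * complex_of_real (t * phi v \<theta>)))"
    unfolding Kmat_def Let_def set_eq v_def ..
  then have "cmod (Kmat t n k) \<le> 5/t" using deriv_bound[OF t v] by simp
  then have "(cmod (Kmat t n k))^2 \<le> (5/t)^2" by (intro power_mono) auto
  also have "\<dots> = 25/t * (1/t)" by (simp add: power2_eq_square)
  also have "\<dots> \<le> 25/t * 1" using t by (intro mult_left_mono) auto
  finally show ?thesis unfolding AA_def Kmat_eq[OF t0, symmetric] by simp
qed

lemma pw_bound:
  assumes s: "\<sigma> > 1/2" and t: "t \<ge> 1"
  shows "wterm \<sigma> t (n, k) \<le> 25/t * (ww \<sigma> n * ww \<sigma> k) + 4/t * (AA t (n - k) * (ww \<sigma> n + ww \<sigma> k))"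
proof -
  have t0: "t > 0" using t by simp
  have A0: "0 \<le> AA t (n - k)" unfolding AA_def by simp
  note wp = ww_props[OF s]
  have P0: "0 \<le> ww \<sigma> n * ww \<sigma> k" using wp(1)[of n] wp(1)[of k] by simp
  have S0: "0 \<le> AA t (n - k) * (ww \<sigma> n + ww \<sigma> k)" using A0 wp(1)[of n] wp(1)[of k] by simp
  show ?thesis
  proof (cases "real_of_int \<bar>n - k\<bar> \<le> t/2")
    case True
    have "wterm \<sigma> t (n, k) \<le> 25/t * (ww \<sigma> n * ww \<sigma> k)"
      unfolding wterm_eq[OF t0] using AA_small[OF t True] P0 by (intro mult_right_mono) auto
    moreover have "0 \<le> 4/t * (AA t (n - k) * (ww \<sigma> n + ww \<sigma> k))" using S0 t0 by simp
    ultimately show ?thesis by linarith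
  next
    case False
    have "real_of_int \<bar>n - k\<bar> \<le> real_of_int \<bar>n\<bar> + real_of_int \<bar>k\<bar>" by simp
    then have "real_of_int \<bar>n\<bar> > t/4 \<or> real_of_int \<bar>k\<bar> > t/4" using False by linarith
    then have "ww \<sigma> n * ww \<sigma> k \<le> 4/t * (ww \<sigma> n + ww \<sigma> k)"
    proof
      assume h: "real_of_int \<bar>n\<bar> > t/4"
      have "ww \<sigma> n \<le> 1 / (1 + real_of_int \<bar>n\<bar>)" by (rule wp(3))
      also have "\<dots> \<le> 4/t" using h t0 by (simp add: field_simps)
      finally have "ww \<sigma> n * ww \<sigma> k \<le> 4/t * ww \<sigma> k" using wp(1)[of k] by (intro mult_right_mono) auto
      also have "\<dots> \<le> 4/t * (ww \<sigma> n + ww \<sigma> k)" using wp(1)[of n] t0 by (intro mult_left_mono) auto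
      finally show ?thesis .
    next
      assume h: "real_of_int \<bar>k\<bar> > t/4"
      have "ww \<sigma> k \<le> 1 / (1 + real_of_int \<bar>k\<bar>)" by (rule wp(3))
      also have "\<dots> \<le> 4/t" using h t0 by (simp add: field_simps)
      finally have "ww \<sigma> n * ww \<sigma> k \<le> ww \<sigma> n * (4/t)" using wp(1)[of n] by (intro mult_left_mono) auto
      also have "\<dots> \<le> 4/t * (ww \<sigma> n + ww \<sigma> k)" using wp(1)[of k] t0 by (simp add: algebra_simps)
      finally show ?thesis .
    qed
    then have "wterm \<sigma> t (n, k) \<le> AA t (n - k) * (4/t * (ww \<sigma> n + ww \<sigma> k))"
      unfolding wterm_eq[OF t0] using A0 by (intro mult_left_mono) auto
    also have "\<dots> = 4/t * (AA t (n - k) * (ww \<sigma> n + ww \<sigma> k))" by simp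
    moreover have "0 \<le> 25/t * (ww \<sigma> n * ww \<sigma> k)" using P0 t0 by simp
    ultimately show ?thesis by linarith
  qed
qed




lemma finite_sum_bound:
  assumes s: "\<sigma> > 1/2" and t: "t \<ge> 1" and S: "\<And>A. finite A \<Longrightarrow> (\<Sum>n\<in>A. ww \<sigma> n) \<le> S"
    and F: "finite F"
  shows "sum (wterm \<sigma> t) F \<le> (25 * S^2 + 176 * S) / t"
proof -
  have t0: "t > 0" using t by simp
  define A where "A = fst ` F \<union> snd ` F"
  have fA: "finite A" unfolding A_def using F by simp
  have FA: "F \<subseteq> A \<times> A" unfolding A_def by force
  note wp = ww_props[OF s]
  have S0: "0 \<le> S" using S[of "{}"] by simp
  have SA: "(\<Sum>n\<in>A. ww \<sigma> n) \<le> S" by (rule S[OF fA])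
  have wnn: "0 \<le> wterm \<sigma> t x" for x
    unfolding wterm_def by (auto split: prod.splits)
  have AAb: "(\<Sum>k\<in>A. AA t (n - k)) \<le> 22" "(\<Sum>k\<in>A. AA t (k - n)) \<le> 22" for n
  proof -
    have "(\<Sum>k\<in>A. (cmod (cc t (nat \<bar>k - n\<bar>)))^2) \<le> 2 * 11"
      by (rule two_to_one[OF cc_bessel fA])
    then show "(\<Sum>k\<in>A. AA t (n - k)) \<le> 22" "(\<Sum>k\<in>A. AA t (k - n)) \<le> 22"
      unfolding AA_def by (simp_all add: abs_minus_commute)
  qed
  have AA0: "0 \<le> AA t m" for m unfolding AA_def by simp
  define g where "g = (\<lambda>n k. 25/t * (ww \<sigma> n * ww \<sigma> k) + 4/t * (AA t (n - k) * (ww \<sigma> n + ww \<sigma> k)))"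
  have "sum (wterm \<sigma> t) F \<le> sum (wterm \<sigma> t) (A \<times> A)"
    using fA FA wnn by (intro sum_mono2) auto
  also have "\<dots> \<le> (\<Sum>(n,k)\<in>A \<times> A. g n k)"
    unfolding g_def using pw_bound[OF s t] by (intro sum_mono) auto
  also have "\<dots> = (\<Sum>n\<in>A. \<Sum>k\<in>A. g n k)" by (rule sum.cartesian_product[symmetric])
  also have "\<dots> = 25/t * ((\<Sum>n\<in>A. ww \<sigma> n) * (\<Sum>k\<in>A. ww \<sigma> k))
       + 4/t * ((\<Sum>n\<in>A. ww \<sigma> n * (\<Sum>k\<in>A. AA t (n - k))) + (\<Sum>k\<in>A. ww \<sigma> k * (\<Sum>n\<in>A. AA t (n - k))))"
  proof -
    have 1: "(\<Sum>n\<in>A. \<Sum>k\<in>A. g n k) = 25/t * (\<Sum>n\<in>A. \<Sum>k\<in>A. ww \<sigma> n * ww \<sigma> k)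
      + 4/t * ((\<Sum>n\<in>A. \<Sum>k\<in>A. AA t (n - k) * ww \<sigma> n) + (\<Sum>n\<in>A. \<Sum>k\<in>A. AA t (n - k) * ww \<sigma> k))"
      unfolding g_def by (simp add: sum.distrib sum_distrib_left algebra_simps)
    have 2: "(\<Sum>n\<in>A. \<Sum>k\<in>A. ww \<sigma> n * ww \<sigma> k) = (\<Sum>n\<in>A. ww \<sigma> n) * (\<Sum>k\<in>A. ww \<sigma> k)"
      by (simp add: sum_product)
    have 3: "(\<Sum>n\<in>A. \<Sum>k\<in>A. AA t (n - k) * ww \<sigma> n) = (\<Sum>n\<in>A. ww \<sigma> n * (\<Sum>k\<in>A. AA t (n - k)))"
      by (simp add: sum_distrib_left mult.commute)
    have 4: "(\<Sum>n\<in>A. \<Sum>k\<in>A. AA t (n - k) * ww \<sigma> k) = (\<Sum>k\<in>A. ww \<sigma> k * (\<Sum>n\<in>A. AA t (n - k)))"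
      by (subst sum.swap) (simp add: sum_distrib_left mult.commute)
    show ?thesis unfolding 1 2 3 4 ..
  qed
  also have "\<dots> \<le> 25/t * (S * S) + 4/t * ((\<Sum>n\<in>A. ww \<sigma> n * 22) + (\<Sum>k\<in>A. ww \<sigma> k * 22))"
  proof -
    have X1: "(\<Sum>n\<in>A. ww \<sigma> n * (\<Sum>k\<in>A. AA t (n - k))) \<le> (\<Sum>n\<in>A. ww \<sigma> n * 22)"
      by (rule sum_mono, rule mult_left_mono) (use AAb(1) wp(1) less_imp_le in auto)
    have X2: "(\<Sum>k\<in>A. ww \<sigma> k * (\<Sum>n\<in>A. AA t (n - k))) \<le> (\<Sum>k\<in>A. ww \<sigma> k * 22)"
      by (rule sum_mono, rule mult_left_mono) (use AAb(2) wp(1) less_imp_le in auto)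
    have W0: "0 \<le> (\<Sum>n\<in>A. ww \<sigma> n)" using wp(1) by (intro sum_nonneg) (simp add: less_imp_le)
    have P: "(\<Sum>n\<in>A. ww \<sigma> n) * (\<Sum>k\<in>A. ww \<sigma> k) \<le> S * S"
      using SA W0 by (intro mult_mono) auto
    have "25/t * ((\<Sum>n\<in>A. ww \<sigma> n) * (\<Sum>k\<in>A. ww \<sigma> k)) \<le> 25/t * (S * S)"
      by (rule mult_left_mono[OF P]) (use t0 in simp)
    moreover have "4/t * ((\<Sum>n\<in>A. ww \<sigma> n * (\<Sum>k\<in>A. AA t (n - k))) + (\<Sum>k\<in>A. ww \<sigma> k * (\<Sum>n\<in>A. AA t (n - k))))
       \<le> 4/t * ((\<Sum>n\<in>A. ww \<sigma> n * 22) + (\<Sum>k\<in>A. ww \<sigma> k * 22))"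
      by (rule mult_left_mono) (use X1 X2 t0 in auto)
    ultimately show ?thesis by linarith
  qed
  also have "\<dots> = 25/t * (S * S) + 4/t * (44 * (\<Sum>n\<in>A. ww \<sigma> n))"
    by (simp add: sum_distrib_right[symmetric])
  also have "\<dots> \<le> 25/t * (S * S) + 4/t * (44 * S)"
    using SA t0 by (intro add_left_mono mult_left_mono) auto
  also have "\<dots> = (25 * S^2 + 176 * S) / t"
    by (simp add: power2_eq_square add_divide_distrib)
  finally show ?thesis .
qed

theorem lemma2p2:
  fixes \<sigma> :: real
  assumes "\<sigma> > 1/2"
  shows "\<exists>C>0. \<forall>t\<ge>1. wterm \<sigma> t summable_on UNIV \<and>
           (\<Sum>\<^sub>\<infinity>nk\<in>UNIV. wterm \<sigma> t nk) \<le> C / t"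
proof -
  obtain S where S: "\<And>A. finite A \<Longrightarrow> (\<Sum>n\<in>A. ww \<sigma> n) \<le> S"
    using ww_sum_bound[OF assms] by blast
  have S0: "0 \<le> S" using S[of "{}"] by simp
  define C where "C = 25 * S^2 + 176 * S + 1"
  have C0: "C > 0" unfolding C_def using S0 by (simp add: add_nonneg_pos)
  have "wterm \<sigma> t summable_on UNIV \<and> (\<Sum>\<^sub>\<infinity>nk\<in>UNIV. wterm \<sigma> t nk) \<le> C / t" if t: "t \<ge> 1" for t
  proof -
    have fb: "sum (wterm \<sigma> t) F \<le> C / t" if "finite F" for F
    proof -
      have "sum (wterm \<sigma> t) F \<le> (25 * S^2 + 176 * S) / t" by (rule finite_sum_bound[OF assms t S that])
      also have "\<dots> \<le> C / t" unfolding C_def using t by (intro divide_right_mono) auto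
      finally show ?thesis .
    qed
    have wnn: "0 \<le> wterm \<sigma> t x" for x
      unfolding wterm_def by (auto split: prod.splits)
    have sm: "wterm \<sigma> t summable_on UNIV"
      by (rule nonneg_bdd_above_summable_on) (use wnn fb in \<open>auto intro!: bdd_aboveI[where M="C/t"]\<close>)
    moreover have "(\<Sum>\<^sub>\<infinity>nk\<in>UNIV. wterm \<sigma> t nk) \<le> C / t"
      by (rule infsum_le_finite_sums[OF sm fb])
    ultimately show ?thesis by blast
  qed
  then show ?thesis using C0 by blast
qed


end
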